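(* Fix a labeling $P$. Let $c$ be a command, $\rho,\mu$ states and $\beta$ a boolean such that $|a|_\mu>0$ for every array $a$, $\mathtt b\notin\mathrm{UsedVars}(c)$, and $\rho(\mathtt b)=\mathrm{nat}(\beta)$. If $\langle\mathrm{FiSLH}_P(c),\rho,\mu,\beta\rangle\xrightarrow[D]{O}{}^*\langle c',\rho',\mu',\beta'\rangle$ in the speculative semantics, then there exists $c''$ such that $\langle c,\rho,\mu,\beta\rangle\xrightarrow[D]{O}{}_i^*\langle c'',\rho'[\mathtt b\mapsto\rho(\mathtt b)],\mu',\beta'\rangle$ in the ideal semantics (w.r.t. $P$), and moreover if $c'=\mathtt{skip}$ then $c''=\mathtt{skip}$ and $\rho'(\mathtt b)=\mathrm{nat}(\beta')$.
   Context: Language AWhile: scalar variables $X\in\mathcal V$, arrays $a\in\mathcal A$; $e::=n\mid X\mid\mathrm{op}_{\mathbb N}(e,\dots,e)\mid be\,?\,e_1:e_2$; $be::=\mathtt{true}\mid\mathtt{false}\mid\mathrm{cmp}(e,e)\mid\mathrm{op}_{\mathbb B}(be,\dots,be)$; $c::=\mathtt{skip}\mid X:=e\mid c_1;c_2\mid\mathtt{if}\ be\ \mathtt{then}\ c_1\ \mathtt{else}\ c_2\mid\mathtt{while}\ be\ \mathtt{do}\ c\mid X\leftarrow a[e]\mid a[e]\leftarrow e'$. Scalar state $\rho:\mathcal V\to\mathbb N$; array state $\mu$ with sizes $|a|_\mu$ and values $\mu(a)[i]$; $[\![\cdot]\!]_\rho$ pure evaluation; $\mathrm{nat}(\mathtt{true})=1$,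 $\mathrm{nat}(\mathtt{false})=0$; $\mathrm{UsedVars}(c)$ is the set of scalar variables in $c$; $\mathtt b$ is a reserved scalar variable. Speculative semantics: configurations $\langle c,\rho,\mu,\beta\rangle$; steps labelled by optional observation ($\mathrm{branch}(v)$, $\mathrm{read}(a,i)$, $\mathrm{write}(a,i)$) and optional directive ($\mathit{step},\mathit{force},\mathrm{load}(a',j),\mathrm{store}(a',j)$). $X:=e\to\mathtt{skip}$ with $\rho[X\mapsto[\![e]\!]_\rho]$; $c_1;c_2\to c_1';c_2$ whenever $c_1\to c_1'$ (same labels); $\mathtt{skip};c\to c$; $\mathtt{while}\ be\ \mathtt{do}\ c\to\mathtt{if}\ be\ \mathtt{then}\ (c;\mathtt{while}\ be\ \mathtt{do}\ c)\ \mathtt{else}\ \mathtt{skip}$ (no obs/directive, flag kept). Conditional with $\mathit{step}$: go to branch $v=[\![be]\!]_\rho$; with $\mathit{force}$: go to branch $\neg v$, set $\beta:=\mathtt{true}$; obs $\mathrm{branch}(v)$. Read $X\leftarrow a[ie]$ with $\mathit{step}$: $i=[\![ie]\!]_\rho<|a|_\mu$, $X:=\mu(a)[i]$; with $\mathrm{load}(a',j)$: requires $\beta=\mathtt{true}$, $i\ge|a|_\mu$, $j<|a'|_\mu$, $X:=\mu(a')[j]$; obs $\mathrm{read}(a,i)$. Write $a[ie]\leftarrow ae$ with $\mathit{step}$: $i<|a|_\mu$, $\mu[a[i]\mapsto[\![ae]\!]_\rho]$; with $\mathrm{store}(a',j)$: requires $\beta=\mathtt{true}$, $i\ge|a|_\mu$,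 $j<|a'|_\mu$, $\mu[a'[j]\mapsto[\![ae]\!]_\rho]$; obs $\mathrm{write}(a,i)$. Multi-step $\xrightarrow[D]{O}{}^*$ collects directive list $D$ and observation list $O$. Labels: $\mathtt{true}$=public, $\mathtt{false}$=secret; $P(e)$, $P(be)$ public iff all variables in it are public under $P:\mathcal V\to$ labels. Ideal semantics (w.r.t. $P$), $\xrightarrow[d]{o}{}_i$: identical to the speculative semantics except: conditional rules (both $\mathit{step}$ and $\mathit{force}$) use $v=(P(be)\vee\neg\beta)\wedge[\![be]\!]_\rho$ in place of $[\![be]\!]_\rho$ (both for the chosen branch and the observation); read with $\mathit{step}$ uses index $i=0$ if $(P(ie)=\mathtt{false}\vee P(X)=\mathtt{true})\wedge\beta$ and $i=[\![ie]\!]_\rho$ otherwise; read with $\mathrm{load}$ additionally requires $P(ie)=\mathtt{true}$ and $P(X)=\mathtt{false}$; write with $\mathit{step}$ uses $i=0$ if $(P(ie)=\mathtt{false}\vee P(ae)=\mathtt{false})\wedge\beta$ and $i=[\![ie]\!]_\rho$ otherwise; write with $\mathrm{store}$ additionally requires $P(ie)=\mathtt{true}$ and $P(ae)=\mathtt{true}$. Multi-step $\xrightarrow[D]{O}{}_i^*$ as before. Transformation $\mathrm{FiSLH}_P$: with $m(i)=(\mathtt b==1)\,?\,0:i$ and $B(be)=(\mathtt b==0\ \&\&\ be)$ if $P(be)=\mathtt{false}$, else $be$: $\mathtt{skip}\mapsto\mathtt{skip}$; $X:=e\mapsto X:=e$; $c_1;c_2\mapsto$ translations sequenced; $\mathtt{if}\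 be\ \mathtt{then}\ c_1\ \mathtt{else}\ c_2\mapsto\mathtt{if}\ B(be)\ \mathtt{then}\ (\mathtt b:=B(be)\,?\,\mathtt b:1;[\![c_1]\!])\ \mathtt{else}\ (\mathtt b:=B(be)\,?\,1:\mathtt b;[\![c_2]\!])$; $\mathtt{while}\ be\ \mathtt{do}\ c\mapsto(\mathtt{while}\ B(be)\ \mathtt{do}\ (\mathtt b:=B(be)\,?\,\mathtt b:1;[\![c]\!]));\ \mathtt b:=B(be)\,?\,1:\mathtt b$; $X\leftarrow a[i]\mapsto X\leftarrow a[m(i)]$ if $P(X)=\mathtt{true}$ or $P(i)=\mathtt{false}$, else unchanged; $a[i]\leftarrow e\mapsto a[m(i)]\leftarrow e$ if $P(e)=\mathtt{false}$ or $P(i)=\mathtt{false}$, else unchanged. *)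

theory Defs
  imports Main
begin

type_synonym vname = string
type_synonym aname = string

datatype aexp =
    ANum nat
  | AId vname
  | AOp "nat list \<Rightarrow> nat" "aexp list"
  | ACTIf bexp aexp aexp
and bexp =
    BTrue
  | BFalse
  | BCmp "nat \<Rightarrow> nat \<Rightarrow> bool" aexp aexp
  | BOp "bool list \<Rightarrow> bool" "bexp list"

datatype com =
    Skip
  | Asgn vname aexp
  | Seq com com
  | If bexp com com
  | While bexp com
  | ARead vname aname aexp
  | AWrite aname aexp aexp

type_synonym state = "vname \<Rightarrow> nat"
type_synonym astate = "aname \<Rightarrow> nat list"   (* |a|_mu = length (mu a), mu(a)[i] = mu a ! i *)

fun aeval :: "state \<Rightarrow> aexp \<Rightarrow> nat" and beval :: "state \<Rightarrow> bexp \<Rightarrow> bool" where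
  "aeval \<rho> (ANum n) = n"
| "aeval \<rho> (AId x) = \<rho> x"
| "aeval \<rho> (AOp f es) = f (map (aeval \<rho>) es)"
| "aeval \<rho> (ACTIf be e1 e2) = (if beval \<rho> be then aeval \<rho> e1 else aeval \<rho> e2)"
| "beval \<rho> BTrue = True"
| "beval \<rho> BFalse = False"
| "beval \<rho> (BCmp f e1 e2) = f (aeval \<rho> e1) (aeval \<rho> e2)"
| "beval \<rho> (BOp f bs) = f (map (beval \<rho>) bs)"

fun avars :: "aexp \<Rightarrow> vname set" and bvars :: "bexp \<Rightarrow> vname set" where
  "avars (ANum n) = {}"
| "avars (AId x) = {x}"
| "avars (AOp f es) = (\<Union>e\<in>set es. avars e)"
| "avars (ACTIf be e1 e2) = bvars be \<union> avars e1 \<union> avars e2"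
| "bvars BTrue = {}"
| "bvars BFalse = {}"
| "bvars (BCmp f e1 e2) = avars e1 \<union> avars e2"
| "bvars (BOp f bs) = (\<Union>b\<in>set bs. bvars b)"

fun used_vars :: "com \<Rightarrow> vname set" where
  "used_vars Skip = {}"
| "used_vars (Asgn x e) = {x} \<union> avars e"
| "used_vars (Seq c1 c2) = used_vars c1 \<union> used_vars c2"
| "used_vars (If be c1 c2) = bvars be \<union> used_vars c1 \<union> used_vars c2"
| "used_vars (While be c) = bvars be \<union> used_vars c"
| "used_vars (ARead x a i) = {x} \<union> avars i"
| "used_vars (AWrite a i e) = avars i \<union> avars e"

definition bvar :: vname where "bvar = ''b''"

text \<open>A labeling: True = public, False = secret.\<close>
type_synonym label_map = "vname \<Rightarrow> bool"

definition alabel :: "label_map \<Rightarrow> aexp \<Rightarrow> bool" where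
  "alabel P e = (\<forall>x\<in>avars e. P x)"

definition blabel :: "label_map \<Rightarrow> bexp \<Rightarrow> bool" where
  "blabel P be = (\<forall>x\<in>bvars be. P x)"

datatype obs = OBranch bool | ORead aname nat | OWrite aname nat
datatype dir = DStep | DForce | DLoad aname nat | DStore aname nat

type_synonym config = "com \<times> state \<times> astate \<times> bool"

text \<open>Single steps carry a list of directives / observations of length at most one
  (empty list = no label).\<close>

inductive spec_step :: "config \<Rightarrow> dir list \<Rightarrow> obs list \<Rightarrow> config \<Rightarrow> bool" where
  Spec_Asgn: "spec_step (Asgn x e, \<rho>, \<mu>, \<beta>) [] [] (Skip, \<rho>(x := aeval \<rho> e), \<mu>, \<beta>)"
| Spec_Seq: "spec_step (c1, \<rho>, \<mu>, \<beta>) ds os (c1', \<rho>', \<mu>', \<beta>') \<Longrightarrow>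
    spec_step (Seq c1 c2, \<rho>, \<mu>, \<beta>) ds os (Seq c1' c2, \<rho>', \<mu>', \<beta>')"
| Spec_Seq_Skip: "spec_step (Seq Skip c, \<rho>, \<mu>, \<beta>) [] [] (c, \<rho>, \<mu>, \<beta>)"
| Spec_If: "v = beval \<rho> be \<Longrightarrow>
    spec_step (If be c1 c2, \<rho>, \<mu>, \<beta>) [DStep] [OBranch v] (if v then c1 else c2, \<rho>, \<mu>, \<beta>)"
| Spec_If_F: "v = beval \<rho> be \<Longrightarrow>
    spec_step (If be c1 c2, \<rho>, \<mu>, \<beta>) [DForce] [OBranch v] (if v then c2 else c1, \<rho>, \<mu>, True)"
| Spec_While: "spec_step (While be c, \<rho>, \<mu>, \<beta>) [] []
    (If be (Seq c (While be c)) Skip, \<rho>, \<mu>, \<beta>)"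
| Spec_ARead: "i = aeval \<rho> ie \<Longrightarrow> i < length (\<mu> a) \<Longrightarrow>
    spec_step (ARead x a ie, \<rho>, \<mu>, \<beta>) [DStep] [ORead a i] (Skip, \<rho>(x := \<mu> a ! i), \<mu>, \<beta>)"
| Spec_ARead_U: "i = aeval \<rho> ie \<Longrightarrow> \<beta> = True \<Longrightarrow> i \<ge> length (\<mu> a) \<Longrightarrow> j < length (\<mu> a') \<Longrightarrow>
    spec_step (ARead x a ie, \<rho>, \<mu>, \<beta>) [DLoad a' j] [ORead a i] (Skip, \<rho>(x := \<mu> a' ! j), \<mu>, \<beta>)"
| Spec_AWrite: "i = aeval \<rho> ie \<Longrightarrow> i < length (\<mu> a) \<Longrightarrow>
    spec_step (AWrite a ie e, \<rho>, \<mu>, \<beta>) [DStep] [OWrite a i]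
      (Skip, \<rho>, \<mu>(a := (\<mu> a)[i := aeval \<rho> e]), \<beta>)"
| Spec_AWrite_U: "i = aeval \<rho> ie \<Longrightarrow> \<beta> = True \<Longrightarrow> i \<ge> length (\<mu> a) \<Longrightarrow> j < length (\<mu> a') \<Longrightarrow>
    spec_step (AWrite a ie e, \<rho>, \<mu>, \<beta>) [DStore a' j] [OWrite a i]
      (Skip, \<rho>, \<mu>(a' := (\<mu> a')[j := aeval \<rho> e]), \<beta>)"

inductive spec_multi :: "config \<Rightarrow> dir list \<Rightarrow> obs list \<Rightarrow> config \<Rightarrow> bool" where
  Spec_Refl: "spec_multi cfg [] [] cfg"
| Spec_Trans: "spec_step cfg ds1 os1 cfg' \<Longrightarrow> spec_multi cfg' ds2 os2 cfg'' \<Longrightarrow>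
    spec_multi cfg (ds1 @ ds2) (os1 @ os2) cfg''"

inductive ideal_step :: "label_map \<Rightarrow> config \<Rightarrow> dir list \<Rightarrow> obs list \<Rightarrow> config \<Rightarrow> bool"
  for P :: label_map where
  Ideal_Asgn: "ideal_step P (Asgn x e, \<rho>, \<mu>, \<beta>) [] [] (Skip, \<rho>(x := aeval \<rho> e), \<mu>, \<beta>)"
| Ideal_Seq: "ideal_step P (c1, \<rho>, \<mu>, \<beta>) ds os (c1', \<rho>', \<mu>', \<beta>') \<Longrightarrow>
    ideal_step P (Seq c1 c2, \<rho>, \<mu>, \<beta>) ds os (Seq c1' c2, \<rho>', \<mu>', \<beta>')"
| Ideal_Seq_Skip: "ideal_step P (Seq Skip c, \<rho>, \<mu>, \<beta>) [] [] (c, \<rho>, \<mu>, \<beta>)"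
| Ideal_If: "v = ((blabel P be \<or> \<not> \<beta>) \<and> beval \<rho> be) \<Longrightarrow>
    ideal_step P (If be c1 c2, \<rho>, \<mu>, \<beta>) [DStep] [OBranch v] (if v then c1 else c2, \<rho>, \<mu>, \<beta>)"
| Ideal_If_F: "v = ((blabel P be \<or> \<not> \<beta>) \<and> beval \<rho> be) \<Longrightarrow>
    ideal_step P (If be c1 c2, \<rho>, \<mu>, \<beta>) [DForce] [OBranch v] (if v then c2 else c1, \<rho>, \<mu>, True)"
| Ideal_While: "ideal_step P (While be c, \<rho>, \<mu>, \<beta>) [] []
    (If be (Seq c (While be c)) Skip, \<rho>, \<mu>, \<beta>)"
| Ideal_ARead: "i = (if (\<not> alabel P ie \<or> P x) \<and> \<beta> then 0 else aeval \<rho> ie) \<Longrightarrow>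
    i < length (\<mu> a) \<Longrightarrow>
    ideal_step P (ARead x a ie, \<rho>, \<mu>, \<beta>) [DStep] [ORead a i] (Skip, \<rho>(x := \<mu> a ! i), \<mu>, \<beta>)"
| Ideal_ARead_U: "i = aeval \<rho> ie \<Longrightarrow> \<beta> = True \<Longrightarrow> i \<ge> length (\<mu> a) \<Longrightarrow> j < length (\<mu> a') \<Longrightarrow>
    alabel P ie \<Longrightarrow> \<not> P x \<Longrightarrow>
    ideal_step P (ARead x a ie, \<rho>, \<mu>, \<beta>) [DLoad a' j] [ORead a i] (Skip, \<rho>(x := \<mu> a' ! j), \<mu>, \<beta>)"
| Ideal_AWrite: "i = (if (\<not> alabel P ie \<or> \<not> alabel P e) \<and> \<beta> then 0 else aeval \<rho> ie) \<Longrightarrow>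
    i < length (\<mu> a) \<Longrightarrow>
    ideal_step P (AWrite a ie e, \<rho>, \<mu>, \<beta>) [DStep] [OWrite a i]
      (Skip, \<rho>, \<mu>(a := (\<mu> a)[i := aeval \<rho> e]), \<beta>)"
| Ideal_AWrite_U: "i = aeval \<rho> ie \<Longrightarrow> \<beta> = True \<Longrightarrow> i \<ge> length (\<mu> a) \<Longrightarrow> j < length (\<mu> a') \<Longrightarrow>
    alabel P ie \<Longrightarrow> alabel P e \<Longrightarrow>
    ideal_step P (AWrite a ie e, \<rho>, \<mu>, \<beta>) [DStore a' j] [OWrite a i]
      (Skip, \<rho>, \<mu>(a' := (\<mu> a')[j := aeval \<rho> e]), \<beta>)"

inductive ideal_multi :: "label_map \<Rightarrow> config \<Rightarrow> dir list \<Rightarrow> obs list \<Rightarrow> config \<Rightarrow> bool"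
  for P :: label_map where
  Ideal_Refl: "ideal_multi P cfg [] [] cfg"
| Ideal_Trans: "ideal_step P cfg ds1 os1 cfg' \<Longrightarrow> ideal_multi P cfg' ds2 os2 cfg'' \<Longrightarrow>
    ideal_multi P cfg (ds1 @ ds2) (os1 @ os2) cfg''"

definition BEq :: "aexp \<Rightarrow> aexp \<Rightarrow> bexp" where
  "BEq e1 e2 = BCmp (=) e1 e2"

definition BAnd :: "bexp \<Rightarrow> bexp \<Rightarrow> bexp" where
  "BAnd b1 b2 = BOp (\<lambda>l. l ! 0 \<and> l ! 1) [b1, b2]"

definition mask_idx :: "aexp \<Rightarrow> aexp" where
  "mask_idx i = ACTIf (BEq (AId bvar) (ANum 1)) (ANum 0) i"

definition guard :: "label_map \<Rightarrow> bexp \<Rightarrow> bexp" where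
  "guard P be = (if blabel P be then be else BAnd (BEq (AId bvar) (ANum 0)) be)"

fun fislh :: "label_map \<Rightarrow> com \<Rightarrow> com" where
  "fislh P Skip = Skip"
| "fislh P (Asgn x e) = Asgn x e"
| "fislh P (Seq c1 c2) = Seq (fislh P c1) (fislh P c2)"
| "fislh P (If be c1 c2) =
     If (guard P be)
        (Seq (Asgn bvar (ACTIf (guard P be) (AId bvar) (ANum 1))) (fislh P c1))
        (Seq (Asgn bvar (ACTIf (guard P be) (ANum 1) (AId bvar))) (fislh P c2))"
| "fislh P (While be c) =
     Seq (While (guard P be)
            (Seq (Asgn bvar (ACTIf (guard P be) (AId bvar) (ANum 1))) (fislh P c)))
         (Asgn bvar (ACTIf (guard P be) (ANum 1) (AId bvar)))"
| "fislh P (ARead x a i) =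
     (if P x \<or> \<not> alabel P i then ARead x a (mask_idx i) else ARead x a i)"
| "fislh P (AWrite a i e) =
     (if \<not> alabel P e \<or> \<not> alabel P i then AWrite a (mask_idx i) e else AWrite a i e)"

end

theory Submission
  imports Defs
begin


lemma eval_upd:
  "x \<notin> avars e \<Longrightarrow> aeval (\<rho>(x:=n)) e = aeval \<rho> e"
  "x \<notin> bvars b \<Longrightarrow> beval (\<rho>(x:=n)) b = beval \<rho> b"
proof (induction e and b)
  case (AOp f es) then show ?case by (auto intro!: arg_cong[where f=f] map_cong)
next
  case (BOp f bs) then show ?case by (auto intro!: arg_cong[where f=f] map_cong)
qed auto

lemma guard_eval:
  "\<rho> bvar = of_bool \<beta> \<Longrightarrow> beval \<rho> (guard P be) = ((blabel P be \<or> \<not>\<beta>) \<and> beval \<rho> be)"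
  by (auto simp: guard_def BAnd_def BEq_def)

lemma mask_eval:
  "\<rho> bvar = of_bool \<beta> \<Longrightarrow> aeval \<rho> (mask_idx i) = (if \<beta> then 0 else aeval \<rho> i)"
  by (auto simp: mask_idx_def BEq_def)



abbreviation A1 where "A1 P be \<equiv> Asgn bvar (ACTIf (guard P be) (AId bvar) (ANum 1))"
abbreviation A2 where "A2 P be \<equiv> Asgn bvar (ACTIf (guard P be) (ANum 1) (AId bvar))"
abbreviation WW where "WW P be c \<equiv> While (guard P be) (Seq (A1 P be) (fislh P c))"

inductive rel :: "label_map \<Rightarrow> com \<Rightarrow> com \<Rightarrow> state \<Rightarrow> bool \<Rightarrow> bool" for P where
  R_skip: "\<rho> bvar = of_bool \<beta> \<Longrightarrow> rel P Skip Skip \<rho> \<beta>"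
| R_asgn: "\<rho> bvar = of_bool \<beta> \<Longrightarrow> bvar \<notin> used_vars (Asgn x e) \<Longrightarrow> rel P (Asgn x e) (Asgn x e) \<rho> \<beta>"
| R_if: "\<rho> bvar = of_bool \<beta> \<Longrightarrow> bvar \<notin> used_vars (If be c1 c2) \<Longrightarrow> rel P (fislh P (If be c1 c2)) (If be c1 c2) \<rho> \<beta>"
| R_while: "\<rho> bvar = of_bool \<beta> \<Longrightarrow> bvar \<notin> used_vars (While be c) \<Longrightarrow> rel P (fislh P (While be c)) (While be c) \<rho> \<beta>"
| R_read: "\<rho> bvar = of_bool \<beta> \<Longrightarrow> bvar \<notin> used_vars (ARead x a i) \<Longrightarrow> rel P (fislh P (ARead x a i)) (ARead x a i) \<rho> \<beta>"
| R_write: "\<rho> bvar = of_bool \<beta> \<Longrightarrow> bvar \<notin> used_vars (AWrite a i e) \<Longrightarrow> rel P (fislh P (AWrite a i e)) (AWrite a i e) \<rho> \<beta>"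
| R_seq: "rel P cs ci \<rho> \<beta> \<Longrightarrow> bvar \<notin> used_vars c2 \<Longrightarrow> rel P (Seq cs (fislh P c2)) (Seq ci c2) \<rho> \<beta>"
| R_pend: "rel P cs ci (\<rho>(bvar := aeval \<rho> e)) \<beta> \<Longrightarrow> rel P (Seq (Asgn bvar e) cs) ci \<rho> \<beta>"
| R_skipseq: "rel P cs ci \<rho> \<beta> \<Longrightarrow> rel P (Seq Skip cs) ci \<rho> \<beta>"
| R_asgnb: "aeval \<rho> e = of_bool \<beta> \<Longrightarrow> rel P (Asgn bvar e) Skip \<rho> \<beta>"
| R_wif: "\<rho> bvar = of_bool \<beta> \<Longrightarrow> bvar \<notin> used_vars (While be c) \<Longrightarrow>
    rel P (Seq (If (guard P be) (Seq (Seq (A1 P be) (fislh P c)) (WW P be c)) Skip) (A2 P be))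
          (If be (Seq c (While be c)) Skip) \<rho> \<beta>"
| R_wbody: "rel P cs ci \<rho> \<beta> \<Longrightarrow> bvar \<notin> used_vars (While be c) \<Longrightarrow>
    rel P (Seq (Seq cs (WW P be c)) (A2 P be)) (Seq ci (While be c)) \<rho> \<beta>"

lemma rel_fislh: "bvar \<notin> used_vars c \<Longrightarrow> \<rho> bvar = of_bool \<beta> \<Longrightarrow> rel P (fislh P c) c \<rho> \<beta>"
proof (induction c)
  case Skip then show ?case by (auto intro: R_skip)
next
  case (Asgn x e) then show ?case by (auto intro: R_asgn)
next
  case (Seq c1 c2) then show ?case by (auto intro: R_seq)
qed (auto intro: rel.intros simp del: fislh.simps)

lemma rel_skip: "rel P Skip ci \<rho> \<beta> \<Longrightarrow> ci = Skip \<and> \<rho> bvar = of_bool \<beta>"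
  by (erule rel.cases) (auto split: if_splits)

inductive_cases SkipE[elim!]: "spec_step (Skip, \<rho>, \<mu>, \<beta>) ds os cfg"
inductive_cases AsgnE: "spec_step (Asgn x e, \<rho>, \<mu>, \<beta>) ds os cfg"
inductive_cases SeqE: "spec_step (Seq c1 c2, \<rho>, \<mu>, \<beta>) ds os cfg"
inductive_cases IfE: "spec_step (If b c1 c2, \<rho>, \<mu>, \<beta>) ds os cfg"
inductive_cases WhileE: "spec_step (While b c, \<rho>, \<mu>, \<beta>) ds os cfg"
inductive_cases AReadE: "spec_step (ARead x a i, \<rho>, \<mu>, \<beta>) ds os cfg"
inductive_cases AWriteE: "spec_step (AWrite a i e, \<rho>, \<mu>, \<beta>) ds os cfg"

lemma len_pres: "spec_step (c, \<rho>, \<mu>, \<beta>) ds os (c', \<rho>', \<mu>', \<beta>') \<Longrightarrow> length (\<mu>' a) = length (\<mu> a)"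
  by (induction "(c, \<rho>, \<mu>, \<beta>)" ds os "(c', \<rho>', \<mu>', \<beta>')" arbitrary: c \<rho> \<mu> \<beta> c' \<rho>' \<mu>' \<beta> \<beta>' rule: spec_step.induct) auto



lemma rel_pend_fislh: "bvar \<notin> used_vars c \<Longrightarrow> aeval \<rho> e = of_bool \<beta> \<Longrightarrow> rel P (Seq (Asgn bvar e) (fislh P c)) c \<rho> \<beta>"
  by (rule R_pend, rule rel_fislh) auto

lemma seq_inv: "spec_step (Seq c1 c2, \<rho>, \<mu>, \<beta>) ds os (c', \<rho>', \<mu>', \<beta>') \<Longrightarrow>
  (\<exists>c1'. c' = Seq c1' c2 \<and> spec_step (c1, \<rho>, \<mu>, \<beta>) ds os (c1', \<rho>', \<mu>', \<beta>'))
  \<or> (c1 = Skip \<and> ds = [] \<and> os = [] \<and> c' = c2 \<and> \<rho>' = \<rho> \<and> \<mu>' = \<mu> \<and> \<beta>' = \<beta>)"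
  by (auto elim!: SeqE)

lemma sim:
  assumes "rel P cs ci \<rho> \<beta>" "spec_step (cs, \<rho>, \<mu>, \<beta>) ds os (cs', \<rho>', \<mu>', \<beta>')" "\<forall>a. 0 < length (\<mu> a)"
  shows "\<exists>ci'. rel P cs' ci' \<rho>' \<beta>' \<and> (ideal_step P (ci, \<rho>(bvar:=v), \<mu>, \<beta>) ds os (ci', \<rho>'(bvar:=v), \<mu>', \<beta>')
     \<or> (ci' = ci \<and> ds = [] \<and> os = [] \<and> \<rho>'(bvar:=v) = \<rho>(bvar:=v) \<and> \<mu>' = \<mu> \<and> \<beta>' = \<beta>))"
  using assms
proof (induction arbitrary: ds os cs' \<rho>' \<mu>' \<beta>' rule: rel.induct)
  case (R_skip \<rho> \<beta>)
  then show ?case by auto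
next
  case (R_asgn \<rho> \<beta> x e)
  have nb: "bvar \<noteq> x" "bvar \<notin> avars e" using R_asgn(2) by auto
  from R_asgn.prems(1) have h: "cs' = Skip" "\<rho>' = \<rho>(x := aeval \<rho> e)" "\<mu>'=\<mu>" "\<beta>'=\<beta>" "ds=[]" "os=[]" by (auto elim: AsgnE)
  have r: "rel P Skip Skip (\<rho>(x := aeval \<rho> e)) \<beta>" using R_asgn(1) nb by (auto intro: R_skip)
  have "ideal_step P (Asgn x e, \<rho>(bvar:=v), \<mu>, \<beta>) [] [] (Skip, \<rho>(x := aeval \<rho> e, bvar:=v), \<mu>, \<beta>)"
    using Ideal_Asgn[of P x e "\<rho>(bvar:=v)" \<mu> \<beta>] nb by (simp add: eval_upd fun_upd_twist)
  then show ?case unfolding h using r by blast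
next
  case (R_if \<rho> \<beta> be c1 c2)
  let ?G = "guard P be"
  have nb: "bvar \<notin> bvars be" "bvar \<notin> used_vars c1" "bvar \<notin> used_vars c2" using R_if(2) by auto
  define v0 where "v0 = beval \<rho> ?G"
  have gv: "v0 = ((blabel P be \<or> \<not>\<beta>) \<and> beval (\<rho>(bvar:=v)) be)"
    unfolding v0_def using guard_eval[of \<rho> \<beta> P be, OF R_if(1)] eval_upd(2)[OF nb(1)] by simp
  have st: "spec_step (If ?G (Seq (A1 P be) (fislh P c1)) (Seq (A2 P be) (fislh P c2)), \<rho>, \<mu>, \<beta>) ds os (cs', \<rho>', \<mu>', \<beta>')"
    using R_if.prems(1) by simp
  then have "(ds = [DStep] \<and> os = [OBranch v0] \<and> cs' = (if v0 then Seq (A1 P be) (fislh P c1) else Seq (A2 P be) (fislh P c2)) \<and> \<rho>' = \<rho> \<and> \<mu>' = \<mu> \<and> \<beta>' = \<beta>)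
    \<or> (ds = [DForce] \<and> os = [OBranch v0] \<and> cs' = (if v0 then Seq (A2 P be) (fislh P c2) else Seq (A1 P be) (fislh P c1)) \<and> \<rho>' = \<rho> \<and> \<mu>' = \<mu> \<and> \<beta>' = True)"
    unfolding v0_def by (auto elim!: IfE)
  then show ?case
  proof (elim disjE conjE)
    assume h: "ds = [DStep]" "os = [OBranch v0]" "cs' = (if v0 then Seq (A1 P be) (fislh P c1) else Seq (A2 P be) (fislh P c2))" "\<rho>' = \<rho>" "\<mu>' = \<mu>" "\<beta>' = \<beta>"
    have "ideal_step P (If be c1 c2, \<rho>(bvar:=v), \<mu>, \<beta>) [DStep] [OBranch v0] (if v0 then c1 else c2, \<rho>(bvar:=v), \<mu>, \<beta>)"
      by (rule Ideal_If) (simp add: gv)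
    moreover have "rel P cs' (if v0 then c1 else c2) \<rho> \<beta>"
      using h nb R_if(1) by (auto intro!: rel_pend_fislh simp: v0_def)
    ultimately show ?thesis using h by blast
  next
    assume h: "ds = [DForce]" "os = [OBranch v0]" "cs' = (if v0 then Seq (A2 P be) (fislh P c2) else Seq (A1 P be) (fislh P c1))" "\<rho>' = \<rho>" "\<mu>' = \<mu>" "\<beta>' = True"
    have "ideal_step P (If be c1 c2, \<rho>(bvar:=v), \<mu>, \<beta>) [DForce] [OBranch v0] (if v0 then c2 else c1, \<rho>(bvar:=v), \<mu>, True)"
      by (rule Ideal_If_F) (simp add: gv)
    moreover have "rel P cs' (if v0 then c2 else c1) \<rho> True"
      using h nb R_if(1) by (auto intro!: rel_pend_fislh simp: v0_def)
    ultimately show ?thesis using h by blast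
  qed
next
  case (R_while \<rho> \<beta> be c)
  have st: "spec_step (Seq (WW P be c) (A2 P be), \<rho>, \<mu>, \<beta>) ds os (cs', \<rho>', \<mu>', \<beta>')"
    using R_while.prems(1) by simp
  then have h: "ds = []" "os = []" "cs' = Seq (If (guard P be) (Seq (Seq (A1 P be) (fislh P c)) (WW P be c)) Skip) (A2 P be)" "\<rho>' = \<rho>" "\<mu>' = \<mu>" "\<beta>' = \<beta>"
    by (auto elim!: SeqE WhileE)
  have "ideal_step P (While be c, \<rho>(bvar:=v), \<mu>, \<beta>) [] [] (If be (Seq c (While be c)) Skip, \<rho>(bvar:=v), \<mu>, \<beta>)"
    by (rule Ideal_While)
  moreover have "rel P cs' (If be (Seq c (While be c)) Skip) \<rho> \<beta>"
    unfolding h(3) by (rule R_wif[where \<rho>=\<rho> and \<beta>=\<beta>, OF R_while(1,2)])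
  ultimately show ?case using h by blast
next
  case (R_read \<rho> \<beta> x a i)
  have nb: "bvar \<noteq> x" "bvar \<notin> avars i" using R_read(2) by auto
  have ev: "aeval (\<rho>(bvar:=v)) i = aeval \<rho> i" using nb eval_upd by auto
  have tw: "\<And>w. \<rho>(bvar:=v, x := w) = \<rho>(x := w, bvar := v)" using nb(1) by (rule fun_upd_twist)
  have rs: "\<And>w. rel P Skip Skip (\<rho>(x := w)) \<beta>" using R_read(1) nb by (auto intro!: R_skip)
  show ?case
  proof (cases "P x \<or> \<not> alabel P i")
    case True
    then have st: "spec_step (ARead x a (mask_idx i), \<rho>, \<mu>, \<beta>) ds os (cs', \<rho>', \<mu>', \<beta>')" using R_read.prems(1) by simp
    define j where "j = (if \<beta> then 0 else aeval \<rho> i)"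
    from st have h: "ds = [DStep]" "os = [ORead a j]" "cs' = Skip" "\<rho>' = \<rho>(x := \<mu> a ! j)" "\<mu>' = \<mu>" "\<beta>' = \<beta>" "j < length (\<mu> a)"
      using R_read.prems(2) mask_eval[of \<rho> \<beta> i, OF R_read(1)] unfolding j_def by (auto elim!: AReadE)
    have "ideal_step P (ARead x a i, \<rho>(bvar:=v), \<mu>, \<beta>) [DStep] [ORead a j] (Skip, \<rho>(bvar:=v, x := \<mu> a ! j), \<mu>, \<beta>)"
      by (rule Ideal_ARead) (use True h ev j_def in auto)
    then show ?thesis unfolding h(1-6) tw using rs by blast
  next
    case False
    then have st: "spec_step (ARead x a i, \<rho>, \<mu>, \<beta>) ds os (cs', \<rho>', \<mu>', \<beta>')" using R_read.prems(1) by simp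
    then have "(ds = [DStep] \<and> os = [ORead a (aeval \<rho> i)] \<and> cs' = Skip \<and> \<rho>' = \<rho>(x := \<mu> a ! aeval \<rho> i) \<and> \<mu>' = \<mu> \<and> \<beta>' = \<beta> \<and> aeval \<rho> i < length (\<mu> a))
      \<or> (\<exists>a' j. ds = [DLoad a' j] \<and> os = [ORead a (aeval \<rho> i)] \<and> cs' = Skip \<and> \<rho>' = \<rho>(x := \<mu> a' ! j) \<and> \<mu>' = \<mu> \<and> \<beta>' = \<beta> \<and> \<beta> \<and> aeval \<rho> i \<ge> length (\<mu> a) \<and> j < length (\<mu> a'))"
      by (auto elim!: AReadE)
    then show ?thesis
    proof (elim disjE exE conjE)
      assume h: "ds = [DStep]" "os = [ORead a (aeval \<rho> i)]" "cs' = Skip" "\<rho>' = \<rho>(x := \<mu> a ! aeval \<rho> i)" "\<mu>' = \<mu>" "\<beta>' = \<beta>" "aeval \<rho> i < length (\<mu> a)"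
      have "ideal_step P (ARead x a i, \<rho>(bvar:=v), \<mu>, \<beta>) [DStep] [ORead a (aeval \<rho> i)] (Skip, \<rho>(bvar:=v, x := \<mu> a ! (aeval \<rho> i)), \<mu>, \<beta>)"
        by (rule Ideal_ARead) (use False h ev in auto)
      then show ?thesis unfolding h(1-6) tw using rs by blast
    next
      fix a' j
      assume h: "ds = [DLoad a' j]" "os = [ORead a (aeval \<rho> i)]" "cs' = Skip" "\<rho>' = \<rho>(x := \<mu> a' ! j)" "\<mu>' = \<mu>" "\<beta>' = \<beta>" "\<beta>" "aeval \<rho> i \<ge> length (\<mu> a)" "j < length (\<mu> a')"
      have "ideal_step P (ARead x a i, \<rho>(bvar:=v), \<mu>, \<beta>) [DLoad a' j] [ORead a (aeval \<rho> i)] (Skip, \<rho>(bvar:=v, x := \<mu> a' ! j), \<mu>, \<beta>)"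
        by (rule Ideal_ARead_U) (use False h ev in auto)
      then show ?thesis unfolding h(1-6) tw using rs by blast
    qed
  qed
next
  case (R_write \<rho> \<beta> a i e)
  have nb: "bvar \<notin> avars e" "bvar \<notin> avars i" using R_write(2) by auto
  have ev: "aeval (\<rho>(bvar:=v)) i = aeval \<rho> i" "aeval (\<rho>(bvar:=v)) e = aeval \<rho> e" using nb eval_upd by auto
  have rs: "rel P Skip Skip \<rho> \<beta>" using R_write(1) by (auto intro!: R_skip)
  show ?case
  proof (cases "\<not> alabel P e \<or> \<not> alabel P i")
    case True
    then have st: "spec_step (AWrite a (mask_idx i) e, \<rho>, \<mu>, \<beta>) ds os (cs', \<rho>', \<mu>', \<beta>')" using R_write.prems(1) by auto
    define j where "j = (if \<beta> then 0 else aeval \<rho> i)"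
    from st have h: "ds = [DStep]" "os = [OWrite a j]" "cs' = Skip" "\<rho>' = \<rho>" "\<mu>' = \<mu>(a := (\<mu> a)[j := aeval \<rho> e])" "\<beta>' = \<beta>" "j < length (\<mu> a)"
      using R_write.prems(2) mask_eval[of \<rho> \<beta> i, OF R_write(1)] unfolding j_def by (auto elim!: AWriteE)
    have "ideal_step P (AWrite a i e, \<rho>(bvar:=v), \<mu>, \<beta>) [DStep] [OWrite a j] (Skip, \<rho>(bvar:=v), \<mu>(a := (\<mu> a)[j := aeval (\<rho>(bvar:=v)) e]), \<beta>)"
      by (rule Ideal_AWrite) (use True h ev j_def in auto)
    then show ?thesis unfolding h(1-6) ev using rs by blast
  next
    case False
    then have st: "spec_step (AWrite a i e, \<rho>, \<mu>, \<beta>) ds os (cs', \<rho>', \<mu>', \<beta>')" using R_write.prems(1) by auto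
    then have "(ds = [DStep] \<and> os = [OWrite a (aeval \<rho> i)] \<and> cs' = Skip \<and> \<rho>' = \<rho> \<and> \<mu>' = \<mu>(a := (\<mu> a)[aeval \<rho> i := aeval \<rho> e]) \<and> \<beta>' = \<beta> \<and> aeval \<rho> i < length (\<mu> a))
      \<or> (\<exists>a' j. ds = [DStore a' j] \<and> os = [OWrite a (aeval \<rho> i)] \<and> cs' = Skip \<and> \<rho>' = \<rho> \<and> \<mu>' = \<mu>(a' := (\<mu> a')[j := aeval \<rho> e]) \<and> \<beta>' = \<beta> \<and> \<beta> \<and> aeval \<rho> i \<ge> length (\<mu> a) \<and> j < length (\<mu> a'))"
      by (auto elim!: AWriteE)
    then show ?thesis
    proof (elim disjE exE conjE)
      assume h: "ds = [DStep]" "os = [OWrite a (aeval \<rho> i)]" "cs' = Skip" "\<rho>' = \<rho>" "\<mu>' = \<mu>(a := (\<mu> a)[aeval \<rho> i := aeval \<rho> e])" "\<beta>' = \<beta>" "aeval \<rho> i < length (\<mu> a)"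
      have "ideal_step P (AWrite a i e, \<rho>(bvar:=v), \<mu>, \<beta>) [DStep] [OWrite a (aeval \<rho> i)] (Skip, \<rho>(bvar:=v), \<mu>(a := (\<mu> a)[aeval \<rho> i := aeval (\<rho>(bvar:=v)) e]), \<beta>)"
        by (rule Ideal_AWrite) (use False h ev in auto)
      then show ?thesis unfolding h(1-6) ev using rs by blast
    next
      fix a' j
      assume h: "ds = [DStore a' j]" "os = [OWrite a (aeval \<rho> i)]" "cs' = Skip" "\<rho>' = \<rho>" "\<mu>' = \<mu>(a' := (\<mu> a')[j := aeval \<rho> e])" "\<beta>' = \<beta>" "\<beta>" "aeval \<rho> i \<ge> length (\<mu> a)" "j < length (\<mu> a')"
      have "ideal_step P (AWrite a i e, \<rho>(bvar:=v), \<mu>, \<beta>) [DStore a' j] [OWrite a (aeval \<rho> i)] (Skip, \<rho>(bvar:=v), \<mu>(a' := (\<mu> a')[j := aeval (\<rho>(bvar:=v)) e]), \<beta>)"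
        by (rule Ideal_AWrite_U) (use False h ev in auto)
      then show ?thesis unfolding h(1-6) ev using rs by blast
    qed
  qed
next
  case (R_seq cs ci \<rho> \<beta> c2)
  from seq_inv[OF R_seq.prems(1)] show ?case
  proof (elim disjE exE conjE)
    fix c1'
    assume h: "cs' = Seq c1' (fislh P c2)" and st: "spec_step (cs, \<rho>, \<mu>, \<beta>) ds os (c1', \<rho>', \<mu>', \<beta>')"
    from R_seq.IH[OF st R_seq.prems(2)] obtain ci' where
      r: "rel P c1' ci' \<rho>' \<beta>'" and
      d: "ideal_step P (ci, \<rho>(bvar:=v), \<mu>, \<beta>) ds os (ci', \<rho>'(bvar:=v), \<mu>', \<beta>')
     \<or> (ci' = ci \<and> ds = [] \<and> os = [] \<and> \<rho>'(bvar:=v) = \<rho>(bvar:=v) \<and> \<mu>' = \<mu> \<and> \<beta>' = \<beta>)" by blast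
    have "rel P cs' (Seq ci' c2) \<rho>' \<beta>'" unfolding h using r \<open>bvar \<notin> used_vars c2\<close> by (rule rel.R_seq)
    moreover from d have "ideal_step P (Seq ci c2, \<rho>(bvar:=v), \<mu>, \<beta>) ds os (Seq ci' c2, \<rho>'(bvar:=v), \<mu>', \<beta>')
     \<or> (Seq ci' c2 = Seq ci c2 \<and> ds = [] \<and> os = [] \<and> \<rho>'(bvar:=v) = \<rho>(bvar:=v) \<and> \<mu>' = \<mu> \<and> \<beta>' = \<beta>)"
      by (auto intro: Ideal_Seq)
    ultimately show ?thesis by blast
  next
    assume h: "cs = Skip" "ds = []" "os = []" "cs' = fislh P c2" "\<rho>' = \<rho>" "\<mu>' = \<mu>" "\<beta>' = \<beta>"
    with \<open>rel P cs ci \<rho> \<beta>\<close> have "ci = Skip" "\<rho> bvar = of_bool \<beta>" using rel_skip by auto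
    moreover have "rel P cs' c2 \<rho>' \<beta>'" using h \<open>bvar \<notin> used_vars c2\<close> \<open>\<rho> bvar = of_bool \<beta>\<close> by (auto intro: rel_fislh)
    ultimately show ?thesis using h by (auto intro: Ideal_Seq_Skip)
  qed
next
  case (R_pend cs ci \<rho> e \<beta>)
  from seq_inv[OF R_pend.prems(1)] show ?case
  proof (elim disjE exE conjE)
    fix c1'
    assume h: "cs' = Seq c1' cs" and st: "spec_step (Asgn bvar e, \<rho>, \<mu>, \<beta>) ds os (c1', \<rho>', \<mu>', \<beta>')"
    from st have e: "c1' = Skip" "\<rho>' = \<rho>(bvar := aeval \<rho> e)" "\<mu>'=\<mu>" "\<beta>'=\<beta>" "ds=[]" "os=[]" by (auto elim: AsgnE)
    have "rel P (Seq Skip cs) ci (\<rho>(bvar := aeval \<rho> e)) \<beta>" using R_pend(1) by (rule R_skipseq)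
    then show ?thesis unfolding e h fun_upd_upd by blast
  qed auto
next
  case (R_skipseq cs ci \<rho> \<beta>)
  from seq_inv[OF R_skipseq.prems(1)] show ?case
    using R_skipseq(1) by auto
next
next
  case (R_asgnb \<rho> e \<beta>)
  from R_asgnb.prems(1) have e: "cs' = Skip" "\<rho>' = \<rho>(bvar := aeval \<rho> e)" "\<mu>'=\<mu>" "\<beta>'=\<beta>" "ds=[]" "os=[]" by (auto elim: AsgnE)
  have "rel P Skip Skip (\<rho>(bvar := aeval \<rho> e)) \<beta>" using R_asgnb(1) by (intro R_skip) simp
  then show ?case unfolding e fun_upd_upd by blast
next
  case (R_wif \<rho> \<beta> be c)
  let ?G = "guard P be"
  have nb: "bvar \<notin> bvars be" "bvar \<notin> used_vars c" using R_wif(2) by auto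
  define v0 where "v0 = beval \<rho> ?G"
  have gv: "v0 = ((blabel P be \<or> \<not>\<beta>) \<and> beval (\<rho>(bvar:=v)) be)"
    unfolding v0_def using guard_eval[of \<rho> \<beta> P be, OF R_wif(1)] eval_upd(2)[OF nb(1)] by simp
  let ?T = "Seq (Seq (Seq (A1 P be) (fislh P c)) (WW P be c)) (A2 P be)"
  let ?E = "Seq Skip (A2 P be)"
  have relT: "rel P ?T (Seq c (While be c)) \<rho> b0" if "aeval \<rho> (ACTIf ?G (AId bvar) (ANum 1)) = of_bool b0" for b0
    by (rule R_wbody, rule rel_pend_fislh) (use that nb R_wif(2) in auto)
  have relE: "rel P ?E Skip \<rho> b0" if "aeval \<rho> (ACTIf ?G (ANum 1) (AId bvar)) = of_bool b0" for b0
    by (rule R_skipseq, rule R_asgnb) (use that in auto)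
  from R_wif.prems(1) have "(ds = [DStep] \<and> os = [OBranch v0] \<and> cs' = (if v0 then ?T else ?E) \<and> \<rho>' = \<rho> \<and> \<mu>' = \<mu> \<and> \<beta>' = \<beta>)
    \<or> (ds = [DForce] \<and> os = [OBranch v0] \<and> cs' = (if v0 then ?E else ?T) \<and> \<rho>' = \<rho> \<and> \<mu>' = \<mu> \<and> \<beta>' = True)"
    unfolding v0_def by (auto elim!: SeqE IfE)
  then show ?case
  proof (elim disjE conjE)
    assume h: "ds = [DStep]" "os = [OBranch v0]" "cs' = (if v0 then ?T else ?E)" "\<rho>' = \<rho>" "\<mu>' = \<mu>" "\<beta>' = \<beta>"
    have "ideal_step P (If be (Seq c (While be c)) Skip, \<rho>(bvar:=v), \<mu>, \<beta>) [DStep] [OBranch v0] (if v0 then Seq c (While be c) else Skip, \<rho>(bvar:=v), \<mu>, \<beta>)"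
      by (rule Ideal_If) (simp add: gv)
    moreover have "rel P cs' (if v0 then Seq c (While be c) else Skip) \<rho> \<beta>"
      proof (cases v0)
        case True
        have "aeval \<rho> (ACTIf ?G (AId bvar) (ANum 1)) = of_bool \<beta>" using True R_wif(1) by (simp add: v0_def)
        from relT[OF this] True show ?thesis by (simp add: h(3))
      next
        case False
        have "aeval \<rho> (ACTIf ?G (ANum 1) (AId bvar)) = of_bool \<beta>" using False R_wif(1) by (simp add: v0_def)
        from relE[OF this] False show ?thesis by (simp add: h(3))
      qed
    ultimately show ?thesis using h by blast
  next
    assume h: "ds = [DForce]" "os = [OBranch v0]" "cs' = (if v0 then ?E else ?T)" "\<rho>' = \<rho>" "\<mu>' = \<mu>" "\<beta>' = True"
    have "ideal_step P (If be (Seq c (While be c)) Skip, \<rho>(bvar:=v), \<mu>, \<beta>) [DForce] [OBranch v0] (if v0 then Skip else Seq c (While be c), \<rho>(bvar:=v), \<mu>, True)"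
      by (rule Ideal_If_F) (simp add: gv)
    moreover have "rel P cs' (if v0 then Skip else Seq c (While be c)) \<rho> True"
      proof (cases v0)
        case True
        have "aeval \<rho> (ACTIf ?G (ANum 1) (AId bvar)) = of_bool True" using True by (simp add: v0_def)
        from relE[OF this] True show ?thesis by (simp add: h(3))
      next
        case False
        have "aeval \<rho> (ACTIf ?G (AId bvar) (ANum 1)) = of_bool True" using False by (simp add: v0_def)
        from relT[OF this] False show ?thesis by (simp add: h(3))
      qed
    ultimately show ?thesis using h by blast
  qed
next
  case (R_wbody cs ci \<rho> \<beta> be c)
  from seq_inv[OF R_wbody.prems(1)] show ?case
  proof (elim disjE exE conjE)
    fix c1'
    assume h0: "cs' = Seq c1' (A2 P be)" and st0: "spec_step (Seq cs (WW P be c), \<rho>, \<mu>, \<beta>) ds os (c1', \<rho>', \<mu>', \<beta>')"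
    from seq_inv[OF st0] show ?thesis
    proof (elim disjE exE conjE)
      fix c1''
      assume h: "c1' = Seq c1'' (WW P be c)" and st: "spec_step (cs, \<rho>, \<mu>, \<beta>) ds os (c1'', \<rho>', \<mu>', \<beta>')"
      from R_wbody.IH[OF st R_wbody.prems(2)] obtain ci' where
        r: "rel P c1'' ci' \<rho>' \<beta>'" and
        d: "ideal_step P (ci, \<rho>(bvar:=v), \<mu>, \<beta>) ds os (ci', \<rho>'(bvar:=v), \<mu>', \<beta>')
       \<or> (ci' = ci \<and> ds = [] \<and> os = [] \<and> \<rho>'(bvar:=v) = \<rho>(bvar:=v) \<and> \<mu>' = \<mu> \<and> \<beta>' = \<beta>)" by blast
      have "rel P cs' (Seq ci' (While be c)) \<rho>' \<beta>'" unfolding h0 h using r \<open>bvar \<notin> used_vars (While be c)\<close> by (rule rel.R_wbody)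
      moreover from d have "ideal_step P (Seq ci (While be c), \<rho>(bvar:=v), \<mu>, \<beta>) ds os (Seq ci' (While be c), \<rho>'(bvar:=v), \<mu>', \<beta>')
       \<or> (Seq ci' (While be c) = Seq ci (While be c) \<and> ds = [] \<and> os = [] \<and> \<rho>'(bvar:=v) = \<rho>(bvar:=v) \<and> \<mu>' = \<mu> \<and> \<beta>' = \<beta>)"
        by (auto intro: Ideal_Seq)
      ultimately show ?thesis by blast
    next
      assume h: "cs = Skip" "ds = []" "os = []" "c1' = WW P be c" "\<rho>' = \<rho>" "\<mu>' = \<mu>" "\<beta>' = \<beta>"
      with \<open>rel P cs ci \<rho> \<beta>\<close> have "ci = Skip" "\<rho> bvar = of_bool \<beta>" using rel_skip by auto
      have "rel P (fislh P (While be c)) (While be c) \<rho> \<beta>"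
        by (rule R_while[where \<rho>=\<rho> and \<beta>=\<beta>]) (use \<open>\<rho> bvar = of_bool \<beta>\<close> \<open>bvar \<notin> used_vars (While be c)\<close> in auto)
      then have "rel P cs' (While be c) \<rho>' \<beta>'" using h h0 by simp
      then show ?thesis using h \<open>ci = Skip\<close> by (auto intro: Ideal_Seq_Skip)
    qed
  qed auto
qed



lemma multi:
  "spec_multi cfg ds os cfg' \<Longrightarrow> cfg = (cs, \<rho>, \<mu>, \<beta>) \<Longrightarrow> cfg' = (cs', \<rho>', \<mu>', \<beta>') \<Longrightarrow>
   rel P cs ci \<rho> \<beta> \<Longrightarrow> \<forall>a. 0 < length (\<mu> a) \<Longrightarrow>
   \<exists>ci'. ideal_multi P (ci, \<rho>(bvar:=v), \<mu>, \<beta>) ds os (ci', \<rho>'(bvar:=v), \<mu>', \<beta>') \<and> rel P cs' ci' \<rho>' \<beta>'"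
proof (induction arbitrary: cs \<rho> \<mu> \<beta> ci rule: spec_multi.induct)
  case (Spec_Refl cfg)
  then show ?case by (auto intro: Ideal_Refl)
next
  case (Spec_Trans cfg ds1 os1 cfg1 ds2 os2 cfg'')
  obtain cs1 \<rho>1 \<mu>1 \<beta>1 where c1: "cfg1 = (cs1, \<rho>1, \<mu>1, \<beta>1)" by (cases cfg1) auto
  have st: "spec_step (cs, \<rho>, \<mu>, \<beta>) ds1 os1 (cs1, \<rho>1, \<mu>1, \<beta>1)" using Spec_Trans c1 by simp
  have len: "\<forall>a. 0 < length (\<mu>1 a)" using len_pres[OF st] Spec_Trans.prems(4) by simp
  from sim[OF Spec_Trans.prems(3) st Spec_Trans.prems(4), of v] obtain ci1 where
    r1: "rel P cs1 ci1 \<rho>1 \<beta>1" and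
    d: "ideal_step P (ci, \<rho>(bvar:=v), \<mu>, \<beta>) ds1 os1 (ci1, \<rho>1(bvar:=v), \<mu>1, \<beta>1)
     \<or> (ci1 = ci \<and> ds1 = [] \<and> os1 = [] \<and> \<rho>1(bvar:=v) = \<rho>(bvar:=v) \<and> \<mu>1 = \<mu> \<and> \<beta>1 = \<beta>)" by blast
  from Spec_Trans.IH[OF c1 Spec_Trans.prems(2) r1 len] obtain ci' where
    m: "ideal_multi P (ci1, \<rho>1(bvar:=v), \<mu>1, \<beta>1) ds2 os2 (ci', \<rho>'(bvar:=v), \<mu>', \<beta>')" and
    r: "rel P cs' ci' \<rho>' \<beta>'" by blast
  from d have "ideal_multi P (ci, \<rho>(bvar:=v), \<mu>, \<beta>) (ds1 @ ds2) (os1 @ os2) (ci', \<rho>'(bvar:=v), \<mu>', \<beta>')"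
  proof
    assume "ideal_step P (ci, \<rho>(bvar:=v), \<mu>, \<beta>) ds1 os1 (ci1, \<rho>1(bvar:=v), \<mu>1, \<beta>1)"
    then show ?thesis using m by (rule Ideal_Trans)
  next
    assume "ci1 = ci \<and> ds1 = [] \<and> os1 = [] \<and> \<rho>1(bvar:=v) = \<rho>(bvar:=v) \<and> \<mu>1 = \<mu> \<and> \<beta>1 = \<beta>"
    then show ?thesis using m by auto
  qed
  then show ?case using r by blast
qed

theorem lemma5p1:
  fixes P :: label_map and c c' :: com and \<rho> \<rho>' :: state and \<mu> \<mu>' :: astate
    and \<beta> \<beta>' :: bool and ds :: "dir list" and os :: "obs list"
  assumes "\<forall>a. 0 < length (\<mu> a)"
    and "bvar \<notin> used_vars c"
    and "\<rho> bvar = of_bool \<beta>"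
    and "spec_multi (fislh P c, \<rho>, \<mu>, \<beta>) ds os (c', \<rho>', \<mu>', \<beta>')"
  shows "\<exists>c''. ideal_multi P (c, \<rho>, \<mu>, \<beta>) ds os (c'', \<rho>'(bvar := \<rho> bvar), \<mu>', \<beta>')
           \<and> (c' = Skip \<longrightarrow> c'' = Skip \<and> \<rho>' bvar = of_bool \<beta>')"
proof -
  have r0: "rel P (fislh P c) c \<rho> \<beta>" using assms(2,3) by (rule rel_fislh)
  from multi[OF assms(4) refl refl r0 assms(1), of "\<rho> bvar"] obtain c'' where
    m: "ideal_multi P (c, \<rho>(bvar := \<rho> bvar), \<mu>, \<beta>) ds os (c'', \<rho>'(bvar := \<rho> bvar), \<mu>', \<beta>')" and
    r: "rel P c' c'' \<rho>' \<beta>'" by blast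
  have "c' = Skip \<longrightarrow> c'' = Skip \<and> \<rho>' bvar = of_bool \<beta>'" using r rel_skip by blast
  with m show ?thesis by auto
qed


end
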